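(* Let $\Gamma$ and the data $s_0,\eta_0,\Xi,s_1$ be as in the context. There exist positive constants $c$ and $c'$ such that for all $\mathbf x\in\mathbb R^{n-1}$, $\gamma\in\Gamma$, $\xi\in\Xi$ with $\gamma\xi\notin P$: if $\|\mathbf x-\gamma\xi\infty\|\le c/h(\gamma\xi\infty)$ then $\mathcal G_{\mathbf x}$ enters the cusp $\gamma\xi\infty$, and if $\|\mathbf x-\gamma\xi\infty\|\le c'/h(\gamma\xi\infty)$ then $\mathcal G_{\mathbf x}$ enters the cusp $\gamma\xi\infty$ deeply.
   Context: $n\ge2$, $G=\mathrm{SO}(n,1)$, $K\cong\mathrm{SO}(n)$ maximal compact. $A=\{a(t)\}$ a one-parameter $\mathbb R$-split torus with $\mathfrak g=\mathfrak g_{-1}\oplus\mathfrak z(A)\oplus\mathfrak g_{+1}$, $\mathrm{Ad}(a(t))=e^{\pm t}$ on $\mathfrak g_{\pm1}$; $M=Z_G(A)\cap K$, $N=\exp\mathfrak g_{+1}$, $\mathfrak g_{+1}\cong\mathbb R^{n-1}$ with $\mathrm{Ad}(M)$-invariant Euclidean norm, $u(\mathbf x)=\exp\mathbf x$; $\sigma\in K$ with $\sigma^2=e$, $\sigma a(t)\sigma^{-1}=a(-t)$; $P=MAN$. Each $g\in G\setminus P$ is $g=u(\mathbf x)\sigma ma(r)u(\mathbf y)$ with $\mathbf x,r$ unique; $\partial\mathbb H^n\cong\mathbb R^{n-1}\cup\{\infty\}$ via $u(\mathbf x)\sigma P\mapsto\mathbf x$, $P\mapsto\infty$. $A_s=\{a(t):t\ge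 s\}$, $\Omega(\eta,s)=\eta A_sK$. $\Gamma$ discrete, finite covolume, $\Gamma\backslash\mathbb H^n$ non-compact, with fixed $s_0>0$, compact $\eta_0\subset N$, finite $\Xi\ni e$ satisfying: (i) $G=\Gamma\Xi\Omega(\eta_0,s_0)$; (ii) $\Gamma\cap\xi N\xi^{-1}$ cocompact in $\xi N\xi^{-1}$; (iii) for compact $\eta$, $\{\gamma:\gamma\Xi\Omega(\eta,s_0)\cap\Omega(\eta,s_0)\ne\emptyset\}$ finite; (iv) for compact $\eta\supseteq\eta_0$ there is $s_1>s_0$ with $\gamma\xi_1\Omega(\eta,s_0)\cap\xi_2\Omega(\eta,s_1)\ne\emptyset\Rightarrow\xi_1=\xi_2,\gamma\in\xi_1NM\xi_1^{-1}$; $s_1$ denotes this number for $\eta=\eta_0$. Height: for $\gamma\xi=u(\mathbf x_1)\sigma ma(r)u(\mathbf y)$, $\gamma\xi\infty=\mathbf x_1$, $h(\gamma\xi\infty)=e^r$. $\mathcal G_{\mathbf x}$: $t\mapsto\Gamma u(\mathbf x)\sigma a(t)M$, $t\ge0$; it enters the cusp $\gamma\xi\infty$ if $u(\mathbf x)\sigma a(t)\in\gamma\xi NA_{s_0}K$ for some $t\ge0$, and enters it deeply if $u(\mathbf x)\sigma a(t)\in\gamma\xi NA_{s_1}K$ for some $t\ge0$. *)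

theory Defs
  imports "HOL-Analysis.Analysis"
begin

text \<open>The index type of R^(n+1) is 'k + bool, where 'k indexes the n-1 coordinates
  of g_{+1} = R^(n-1) (so n - 1 = CARD('k), n \<ge> 2 automatically),
  Inr False is the coordinate 0 and Inr True the time-like coordinate n.\<close>

type_synonym 'k lmat = "real^('k + bool)^('k + bool)"

definition Jf :: "'k::finite lmat" where
  "Jf = (\<chi> i j. if i = j then (if i = Inr True then -1 else 1) else 0)"

text \<open>G = SO(n,1) identity component (= SO(n,1)^0, whose maximal compact is SO(n)).\<close>
definition LG :: "'k::finite lmat set" where
  "LG = {g. transpose g ** Jf ** g = Jf \<and> det g = 1 \<and> g $ Inr True $ Inr True > 0}"

text \<open>K: stabiliser of the base point (0,...,0,1) of the hyperboloid model; K \<cong> SO(n).\<close>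
definition LK :: "'k::finite lmat set" where
  "LK = {g \<in> LG. g *v axis (Inr True) 1 = axis (Inr True) 1}"

text \<open>a(t) = exp(tH), H the boost generator in the (0,n)-plane.\<close>
definition LA :: "real \<Rightarrow> 'k::finite lmat" where
  "LA t = (\<chi> r c. if r = Inr False \<or> r = Inr True
      then (if r = c then cosh t else if c = Inr False \<or> c = Inr True then sinh t else 0)
      else (if r = c then 1 else 0))"

text \<open>The element X(x) of g_{+1} (eigenspace of ad H for eigenvalue +1), x in R^(n-1).\<close>
definition Xm :: "real^'k \<Rightarrow> 'k::finite lmat" where
  "Xm x = (\<chi> r c. case r of
       Inl i \<Rightarrow> (case c of Inr b \<Rightarrow> (if b then - (x $ i) else x $ i) | Inl _ \<Rightarrow> 0)
     | Inr _ \<Rightarrow> (case c of Inl j \<Rightarrow> - (x $ j) | Inr _ \<Rightarrow> 0))"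

text \<open>u(x) = exp X(x); since X(x)^3 = 0 the exponential series is I + X + X^2/2.\<close>
definition uu :: "real^'k \<Rightarrow> 'k::finite lmat" where
  "uu x = mat 1 + Xm x + (1/2) *\<^sub>R (Xm x ** Xm x)"

definition LN :: "'k::finite lmat set" where
  "LN = range uu"

definition LM :: "'k::finite lmat set" where
  "LM = {m \<in> LK. \<forall>t. m ** LA t = LA t ** m}"

definition LP :: "'k::finite lmat set" where
  "LP = {m ** LA t ** uu y | m t y. m \<in> LM}"

definition Omega :: "'k::finite lmat set \<Rightarrow> real \<Rightarrow> 'k lmat set" where
  "Omega eta s = {v ** LA t ** k | v t k. v \<in> eta \<and> s \<le> t \<and> k \<in> LK}"

definition lmul :: "'k::finite lmat \<Rightarrow> 'k lmat set \<Rightarrow> 'k lmat set" where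
  "lmul g S = (\<lambda>w. g ** w) ` S"

text \<open>For g = u(x) sg m a(r) u(y): g infinity = x and h(g infinity) = e^r.\<close>
definition bdry :: "'k::finite lmat \<Rightarrow> 'k lmat \<Rightarrow> real^'k" where
  "bdry sg g = (THE x. \<exists>m\<in>LM. \<exists>r y. g = uu x ** sg ** m ** LA r ** uu y)"

definition height :: "'k::finite lmat \<Rightarrow> 'k lmat \<Rightarrow> real" where
  "height sg g = exp (THE r. \<exists>x. \<exists>m\<in>LM. \<exists>y. g = uu x ** sg ** m ** LA r ** uu y)"

definition enters :: "'k::finite lmat \<Rightarrow> real^'k \<Rightarrow> 'k lmat \<Rightarrow> real \<Rightarrow> bool" where
  "enters sg x g s = (\<exists>t\<ge>0. uu x ** sg ** LA t \<in> lmul g (Omega LN s))"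

end

theory Submission
  imports Defs
begin


definition spt :: "real^('k::finite+bool) \<Rightarrow> real^'k" where
  "spt v = (\<chi> i. v $ Inl i)"

lemma sum_Plus_UNIV: "(\<Sum>i\<in>(UNIV::('k::finite+bool) set). f i)
   = (\<Sum>i\<in>UNIV. f (Inl i)) + f (Inr False) + f (Inr True)"
proof -
  have "(\<Sum>i\<in>(UNIV::('k+bool) set). f i) = (\<Sum>i\<in>(UNIV <+> UNIV). f i)" by simp
  also have "\<dots> = (\<Sum>i\<in>UNIV. f (Inl i)) + (\<Sum>b\<in>UNIV. f (Inr b))"
    by (subst sum.Plus) auto
  also have "(\<Sum>b\<in>(UNIV::bool set). f (Inr b)) = f (Inr False) + f (Inr True)"
    by (simp add: UNIV_bool)
  finally show ?thesis by (simp add: add.assoc)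
qed

lemma inner_split: "(v::real^('k::finite+bool)) \<bullet> w
   = spt v \<bullet> spt w + v$Inr False * w$Inr False + v$Inr True * w$Inr True"
  by (simp add: inner_vec_def sum_Plus_UNIV spt_def)

lemma vec_eq_split: "(v::real^('k::finite+bool)) = w \<longleftrightarrow>
   spt v = spt w \<and> v$Inr False = w$Inr False \<and> v$Inr True = w$Inr True"
  apply (auto simp: vec_eq_iff spt_def)
  by (metis (full_types) sum.exhaust)

lemma spt_add[simp]: "spt (v + w) = spt v + spt w"
  and spt_scaleR[simp]: "spt (c *\<^sub>R v) = c *\<^sub>R spt v"
  and spt_minus[simp]: "spt (v - w) = spt v - spt w"
  and spt_uminus[simp]: "spt (- v) = - spt v"
  and spt_zero[simp]: "spt 0 = 0"
  by (auto simp: spt_def vec_eq_iff)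

lemma Xm_mulv:
  "spt (Xm x *v v) = (v$Inr False - v$Inr True) *\<^sub>R x"
  "(Xm x *v v)$Inr b = - (x \<bullet> spt v)"
  by (auto simp: spt_def vec_eq_iff matrix_vector_mult_def Xm_def sum_Plus_UNIV
      inner_vec_def algebra_simps sum_negf)

lemma inner_aux: "x \<bullet> (a *\<^sub>R x - b *\<^sub>R x) = (a-b) * (x \<bullet> x)" for x :: "real^'k::finite"
  by (simp add: inner_diff_right algebra_simps)

lemma uu_mulv:
  "spt (uu x *v v) = spt v + (v$Inr False - v$Inr True) *\<^sub>R x"
  "(uu x *v v)$Inr False = v$Inr False - x \<bullet> spt v - (x \<bullet> x) * (v$Inr False - v$Inr True) / 2"
  "(uu x *v v)$Inr True = v$Inr True - x \<bullet> spt v - (x \<bullet> x) * (v$Inr False - v$Inr True) / 2"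
proof -
  have e: "uu x *v v = v + Xm x *v v + (1/2) *\<^sub>R (Xm x *v (Xm x *v v))"
    by (simp add: uu_def matrix_vector_mult_add_rdistrib scaleR_matrix_vector_assoc
        matrix_vector_mul_assoc)
  show "spt (uu x *v v) = spt v + (v$Inr False - v$Inr True) *\<^sub>R x"
    unfolding e by (simp add: Xm_mulv)
  have h: "(uu x *v v)$Inr b = v$Inr b - x \<bullet> spt v - (x \<bullet> x) * (v$Inr False - v$Inr True) / 2" for b
    unfolding e by (simp only: vector_add_component vector_scaleR_component Xm_mulv inner_scaleR_right real_scaleR_def) argo
  show "(uu x *v v)$Inr False = v$Inr False - x \<bullet> spt v - (x \<bullet> x) * (v$Inr False - v$Inr True) / 2"
    by (rule h)
  show "(uu x *v v)$Inr True = v$Inr True - x \<bullet> spt v - (x \<bullet> x) * (v$Inr False - v$Inr True) / 2"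
    by (rule h)
qed

lemma if01_mult: "(if P then 1 else 0) * (a::real) = (if P then a else 0)" by simp

lemma Jf_mulv:
  "spt (Jf *v v) = spt v"
  "(Jf *v v)$Inr False = v$Inr False"
  "(Jf *v v)$Inr True = - v$Inr True"
  by (auto simp: spt_def vec_eq_iff matrix_vector_mult_def Jf_def sum_Plus_UNIV if01_mult)


lemma LA_mulv:
  "spt (LA t *v v) = spt v"
  "(LA t *v v)$Inr False = cosh t * v$Inr False + sinh t * v$Inr True"
  "(LA t *v v)$Inr True = sinh t * v$Inr False + cosh t * v$Inr True"
  by (simp_all add: spt_def vec_eq_iff matrix_vector_mult_def LA_def sum_Plus_UNIV if01_mult)



definition lf :: "real^('k::finite+bool) \<Rightarrow> real^('k+bool) \<Rightarrow> real" where
  "lf v w = spt v \<bullet> spt w + v$Inr False * w$Inr False - v$Inr True * w$Inr True"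

definition LGw :: "'k::finite lmat set" where
  "LGw = {g. transpose g ** Jf ** g = Jf \<and> det g = 1}"

lemma lf_Jf: "v \<bullet> (Jf *v w) = lf v w"
  by (simp add: inner_split Jf_mulv lf_def)

lemma lf_sym: "lf v w = lf w v"
  by (simp add: lf_def inner_commute mult.commute)

lemma lf_add_left: "lf (u + v) w = lf u w + lf v w"
  and lf_scale_left: "lf (c *\<^sub>R v) w = c * lf v w"
  and lf_add_right: "lf w (u + v) = lf w u + lf w v"
  and lf_scale_right: "lf w (c *\<^sub>R v) = c * lf w v"
  and lf_diff_left: "lf (u - v) w = lf u w - lf v w"
  and lf_diff_right: "lf w (u - v) = lf w u - lf w v"
  by (simp_all add: lf_def inner_add_left inner_add_right inner_diff_left inner_diff_right algebra_simps)

lemma inner_mulv_transpose: "(g *v v) \<bullet> y = v \<bullet> (transpose g *v y)" for g :: "real^'n^'n"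
  by (metis dot_lmul_matrix inner_commute transpose_matrix_vector)

lemma lorentz_pres:
  fixes g :: "'k::finite lmat"
  assumes "transpose g ** Jf ** g = Jf"
  shows "lf (g *v v) (g *v w) = lf v w"
proof -
  have "lf (g *v v) (g *v w) = (g *v v) \<bullet> (Jf *v (g *v w))" by (simp add: lf_Jf)
  also have "\<dots> = v \<bullet> ((transpose g ** Jf ** g) *v w)"
    unfolding inner_mulv_transpose[of g v] matrix_vector_mul_assoc matrix_mul_assoc ..
  also have "\<dots> = lf v w" using assms by (simp add: lf_Jf)
  finally show ?thesis .
qed

lemma lorentz_of_pres:
  fixes g :: "'k::finite lmat"
  assumes "\<And>v w. lf (g *v v) (g *v w) = lf v w"
  shows "transpose g ** Jf ** g = Jf"
proof -
  have "(transpose g ** Jf ** g) *v w = Jf *v w" for w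
  proof -
    let ?a = "(transpose g ** Jf ** g) *v w" and ?b = "Jf *v w"
    have vab: "v \<bullet> ?a = v \<bullet> ?b" for v
    proof -
      have "v \<bullet> ?a = lf (g *v v) (g *v w)"
        by (simp only: lf_Jf[symmetric] inner_mulv_transpose matrix_vector_mul_assoc matrix_mul_assoc)
      also have "\<dots> = v \<bullet> ?b" using assms by (simp add: lf_Jf)
      finally show ?thesis .
    qed
    have "(?a - ?b) \<bullet> (?a - ?b) = 0"
      unfolding inner_diff_right[of "?a - ?b" ?a ?b] using vab[of "?a-?b"] by simp
    then show ?thesis by simp
  qed
  then show ?thesis by (simp add: matrix_eq)
qed

lemma LGw_pres: "g \<in> LGw \<Longrightarrow> lf (g *v v) (g *v w) = lf v w"
  by (simp add: LGw_def lorentz_pres)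

lemma LK_LG: "LK \<subseteq> LG" by (auto simp: LK_def)
lemma LG_LGw: "LG \<subseteq> LGw" by (auto simp: LG_def LGw_def)
lemma LM_LK: "LM \<subseteq> LK" by (auto simp: LM_def)

lemma LGw_mult: "g \<in> LGw \<Longrightarrow> h \<in> LGw \<Longrightarrow> g ** h \<in> LGw"
  unfolding LGw_def
  apply (auto simp: det_mul)
  apply (rule lorentz_of_pres)
  apply (simp add: matrix_vector_mul_assoc[symmetric] lorentz_pres)
  done

lemma matrix_inv_eq:
  fixes A B :: "real^'n^'n"
  assumes "A ** B = mat 1"
  shows "matrix_inv A = B"
proof -
  have BA: "B ** A = mat 1" using assms matrix_left_right_inverse by blast
  have "A ** matrix_inv A = mat 1 \<and> matrix_inv A ** A = mat 1"
    unfolding matrix_inv_def by (rule someI[of _ B]) (use assms BA in auto)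
  then have "matrix_inv A = matrix_inv A ** (A ** B)" using assms by simp
  also have "\<dots> = B" by (simp add: matrix_mul_assoc \<open>_ \<and> _\<close>)
  finally show ?thesis .
qed

lemma LGw_inv:
  assumes "g \<in> LGw"
  shows "g ** matrix_inv g = mat 1" "matrix_inv g ** g = mat 1" "matrix_inv g \<in> LGw"
proof -
  have "invertible g" using assms by (simp add: LGw_def invertible_det_nz)
  then obtain h where h: "g ** h = mat 1" "h ** g = mat 1" by (auto simp: invertible_def)
  have hi: "matrix_inv g = h" using h(1) by (rule matrix_inv_eq)
  show "g ** matrix_inv g = mat 1" "matrix_inv g ** g = mat 1" using h hi by auto
  have "det g * det h = 1" using h by (metis det_I det_mul)
  then have dh: "det h = 1" using assms by (simp add: LGw_def)
  have "lf (h *v v) (h *v w) = lf v w" for v w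
  proof -
    have "lf (h *v v) (h *v w) = lf (g *v (h *v v)) (g *v (h *v w))"
      using assms by (simp add: LGw_pres)
    also have "\<dots> = lf v w" by (simp add: matrix_vector_mul_assoc h)
    finally show ?thesis .
  qed
  then show "matrix_inv g \<in> LGw" using hi dh by (simp add: LGw_def lorentz_of_pres)
qed



definition e0 :: "real^('k::finite+bool)" where "e0 = axis (Inr False) 1"
definition en :: "real^('k::finite+bool)" where "en = axis (Inr True) 1"
definition nu :: "real^('k::finite+bool)" where "nu = e0 + en"

lemma e0_c[simp]: "spt e0 = 0" "e0$Inr False = 1" "e0$Inr True = 0"
  by (auto simp: e0_def spt_def vec_eq_iff axis_def)
lemma en_c[simp]: "spt en = 0" "en$Inr False = 0" "en$Inr True = 1"
  by (auto simp: en_def spt_def vec_eq_iff axis_def)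
lemma nu_c[simp]: "spt nu = 0" "nu$Inr False = 1" "nu$Inr True = 1"
  by (auto simp: nu_def)

lemma uu_mult: "uu a ** uu b = uu (a + b)"
proof -
  have "uu a *v (uu b *v v) = uu (a + b) *v v" for v
    unfolding vec_eq_split
    by (simp add: uu_mulv inner_add_left inner_add_right inner_scaleR_left inner_scaleR_right
        inner_commute algebra_simps add_divide_distrib diff_divide_distrib)
  then show ?thesis by (simp add: matrix_eq matrix_vector_mul_assoc)
qed

lemma uu_zero: "(uu 0 :: 'k::finite lmat) = mat 1"
proof -
  have "(uu 0 :: 'k lmat) *v v = v" for v unfolding vec_eq_split by (simp add: uu_mulv)
  then show ?thesis by (simp add: matrix_eq)
qed

lemma uu_inv: "uu a ** uu (-a) = (mat 1 :: 'k::finite lmat)" "uu (-a) ** uu a = (mat 1 :: 'k::finite lmat)"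
  by (simp_all add: uu_mult uu_zero)

lemma LA_mult: "(LA a :: 'k::finite lmat) ** LA b = LA (a + b)"
proof -
  have "(LA a :: 'k lmat) *v (LA b *v v) = LA (a + b) *v v" for v
    unfolding vec_eq_split
    by (simp add: LA_mulv cosh_add sinh_add algebra_simps)
  then show ?thesis by (simp add: matrix_eq matrix_vector_mul_assoc)
qed

lemma LA_zero: "(LA 0 :: 'k::finite lmat) = mat 1"
proof -
  have "(LA 0 :: 'k lmat) *v v = v" for v unfolding vec_eq_split by (simp add: LA_mulv)
  then show ?thesis by (simp add: matrix_eq)
qed

lemma LA_inv: "LA a ** LA (-a) = (mat 1 :: 'k::finite lmat)" "LA (-a) ** LA a = (mat 1 :: 'k::finite lmat)"
  by (simp_all add: LA_mult LA_zero)

lemma Jf_sq: "Jf ** Jf = (mat 1 :: 'k::finite lmat)"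
proof -
  have "Jf *v (Jf *v v) = v" for v :: "real^('k+bool)" unfolding vec_eq_split by (simp add: Jf_mulv)
  then show ?thesis by (simp add: matrix_eq matrix_vector_mul_assoc)
qed

lemma det_sq_pres:
  fixes g :: "'k::finite lmat"
  assumes "transpose g ** Jf ** g = Jf"
  shows "det g * det g = 1"
proof -
  have dJ: "det (Jf::'k lmat) * det (Jf::'k lmat) = 1" by (metis Jf_sq det_I det_mul)
  have "det g * det (Jf::'k lmat) * det g = det (Jf::'k lmat)"
    by (metis assms det_mul det_transpose)
  then have "det (Jf::'k lmat) * (det g * det g - 1) = 0" by (simp add: algebra_simps)
  with dJ show ?thesis by auto
qed

lemma uu_pres: "lf (uu x *v v) (uu x *v w) = lf v w"
  unfolding lf_def
  by (simp add: uu_mulv inner_add_left inner_add_right inner_scaleR_left inner_scaleR_right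
        inner_diff_left inner_diff_right inner_commute algebra_simps add_divide_distrib diff_divide_distrib)

lemma LA_pres: "lf ((LA t :: 'k::finite lmat) *v v) (LA t *v w) = lf v w"
proof -
  have "cosh t * cosh t = sinh t * sinh t + 1" using cosh_square_eq[of t] by (simp add: power2_eq_square)
  moreover have "lf ((LA t :: 'k lmat) *v v) (LA t *v w) - lf v w =
     (cosh t * cosh t - sinh t * sinh t - 1) * (v$Inr False * w$Inr False - v$Inr True * w$Inr True)"
    unfolding lf_def by (simp add: LA_mulv algebra_simps)
  ultimately show ?thesis by simp
qed

lemma column_entry: "(A *v axis j 1) $ i = A $ i $ j" for A :: "real^'n^'m"
  by (simp add: matrix_vector_mult_basis column_def)

lemma LK_crit: "g \<in> LGw \<Longrightarrow> g *v en = en \<Longrightarrow> g \<in> LK"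
  unfolding LK_def LG_def LGw_def
  by (simp add: en_def[symmetric]) (metis column_entry en_c(3) en_def zero_less_one)

lemma uu_LG: "uu x \<in> LG" "uu x \<in> LGw"
proof -
  have t: "transpose (uu x) ** Jf ** uu x = Jf" for x :: "real^'k"
    by (rule lorentz_of_pres) (rule uu_pres)
  have hx: "(1/2::real) *\<^sub>R x + (1/2::real) *\<^sub>R x = x" by (simp flip: scaleR_left_distrib)
  have "det (uu x) = det (uu ((1/2::real) *\<^sub>R x) ** uu ((1/2::real) *\<^sub>R x))"
    by (simp only: uu_mult hx)
  also have "\<dots> = det (uu ((1/2::real) *\<^sub>R x)) * det (uu ((1/2::real) *\<^sub>R x))" by (rule det_mul)
  finally have d: "det (uu x) = 1" using det_sq_pres[OF t[of "(1/2::real) *\<^sub>R x"]] by simp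
  have "(uu x) $ Inr True $ Inr True = (uu x *v en) $ Inr True" by (simp add: en_def column_entry)
  also have "\<dots> = 1 + (x \<bullet> x)/2" by (simp add: uu_mulv)
  finally have p: "(uu x) $ Inr True $ Inr True > 0"
    by (metis add_pos_nonneg divide_nonneg_pos inner_ge_zero zero_less_one zero_less_numeral)
  show "uu x \<in> LG" using t d p by (simp add: LG_def)
  then show "uu x \<in> LGw" using LG_LGw by blast
qed

lemma LA_LG: "(LA t :: 'k::finite lmat) \<in> LG" "(LA t :: 'k::finite lmat) \<in> LGw"
proof -
  have tt: "transpose (LA t) ** Jf ** LA t = (Jf :: 'k lmat)" for t
    by (rule lorentz_of_pres) (rule LA_pres)
  have "det (LA t :: 'k lmat) = det ((LA (t/2) :: 'k lmat) ** LA (t/2))"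
    by (simp only: LA_mult field_sum_of_halves)
  also have "\<dots> = det (LA (t/2) :: 'k lmat) * det (LA (t/2) :: 'k lmat)" by (rule det_mul)
  finally have "det (LA t :: 'k lmat) = det (LA (t/2) :: 'k lmat) * det (LA (t/2) :: 'k lmat)" .
  then have d: "det (LA t :: 'k lmat) = 1" using det_sq_pres[OF tt[of "t/2"]] by simp
  have "(LA t :: 'k lmat) $ Inr True $ Inr True = ((LA t :: 'k lmat) *v en) $ Inr True" by (simp add: en_def column_entry)
  also have "\<dots> = cosh t" by (simp add: LA_mulv)
  finally have p: "(LA t :: 'k lmat) $ Inr True $ Inr True > 0" by simp
  show "(LA t :: 'k lmat) \<in> LG" using tt d p by (simp add: LG_def)
  then show "(LA t :: 'k lmat) \<in> LGw" using LG_LGw by blast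
qed



lemma mv_lin: "A *v (a *\<^sub>R v + b *\<^sub>R w) = a *\<^sub>R (A *v v) + b *\<^sub>R (A *v w)"
  for A :: "real^'n^'m"
  by (simp add: matrix_vector_right_distrib matrix_vector_mult_scaleR)

lemma cancel_l: "A ** B = mat 1 \<Longrightarrow> A ** (B ** X) = X" for A B X :: "real^'n^'n"
  by (simp add: matrix_mul_assoc)

lemma cancel_v: "A ** B = mat 1 \<Longrightarrow> A *v (B *v v) = v" for A B :: "real^'n^'n"
  by (simp add: matrix_vector_mul_assoc)

lemma uu_nu: "uu x *v nu = nu"
  unfolding vec_eq_split by (simp add: uu_mulv)

lemma uu_nub: "spt (uu x *v (en - e0)) = (-2) *\<^sub>R x"
  "(uu x *v (en - e0))$Inr False = x \<bullet> x - 1"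
  "(uu x *v (en - e0))$Inr True = x \<bullet> x + 1"
  by (simp add: uu_mulv) (simp_all add: uu_mulv algebra_simps)

lemma LA_nu: "(LA t :: 'k::finite lmat) *v nu = exp t *\<^sub>R nu"
  unfolding vec_eq_split by (simp add: LA_mulv cosh_plus_sinh sinh_plus_cosh)

lemma LA_nub: "(LA t :: 'k::finite lmat) *v (en - e0) = exp (-t) *\<^sub>R (en - e0)"
  using sinh_minus_cosh[of t] unfolding vec_eq_split by (auto simp: LA_mulv)

lemma LA_en: "(LA t :: 'k::finite lmat) *v en = sinh t *\<^sub>R e0 + cosh t *\<^sub>R en"
  unfolding vec_eq_split by (simp add: LA_mulv)

lemma lf_e0: "lf w e0 = w$Inr False" and lf_en: "lf w en = - w$Inr True"
  and lf_nu: "lf w nu = w$Inr False - w$Inr True"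
  by (simp_all add: lf_def)

lemma LM_facts:
  assumes "m \<in> LM"
  shows "m *v en = en" "m *v e0 = e0" "m *v nu = nu" "m \<in> LK" "m \<in> LGw"
proof -
  show mK: "m \<in> LK" using assms LM_LK by blast
  then show "m \<in> LGw" using LK_LG LG_LGw by blast
  show men: "m *v en = en" using mK by (simp add: LK_def en_def)
  have "m ** LA 1 = LA 1 ** m" using assms by (simp add: LM_def)
  then have "m *v (LA 1 *v en) = LA 1 *v (m *v en)" by (simp add: matrix_vector_mul_assoc)
  then have "sinh 1 *\<^sub>R (m *v e0) + cosh 1 *\<^sub>R en = sinh 1 *\<^sub>R e0 + cosh 1 *\<^sub>R en"
    by (simp add: LA_en mv_lin men)
  then have "sinh (1::real) *\<^sub>R (m *v e0) = sinh 1 *\<^sub>R e0" by simp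
  then show me0: "m *v e0 = e0" by simp
  show "m *v nu = nu" by (simp add: nu_def matrix_vector_right_distrib me0 men)
qed

lemma LA_decomp: "(LA t :: 'k::finite lmat) *v v = v + ((cosh t - 1) * v$Inr False + sinh t * v$Inr True) *\<^sub>R e0
   + (sinh t * v$Inr False + (cosh t - 1) * v$Inr True) *\<^sub>R en"
  unfolding vec_eq_split by (simp add: LA_mulv algebra_simps)

lemma fix_e0_en_LM:
  assumes "m \<in> LGw" "m *v en = en" "m *v e0 = e0"
  shows "m \<in> LM"
proof -
  have mK: "m \<in> LK" using assms LK_crit by blast
  have c0: "(m *v v)$Inr False = v$Inr False" for v
    by (metis LGw_pres assms(1,3) lf_e0)
  have cn: "(m *v v)$Inr True = v$Inr True" for v
    by (metis LGw_pres assms(1,2) lf_en neg_equal_iff_equal)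
  have "m *v (LA t *v v) = LA t *v (m *v v)" for t v
    apply (subst (1 2) LA_decomp)
    by (simp add: matrix_vector_right_distrib matrix_vector_mult_scaleR assms(2,3) c0 cn)
  then have "m ** LA t = LA t ** m" for t by (simp add: matrix_eq matrix_vector_mul_assoc)
  with mK show ?thesis by (simp add: LM_def)
qed

lemma sinh_ne: "sinh (1::real) \<noteq> 0" by simp



lemma iwa_alg:
  fixes E a p0 pn :: real
  assumes "E > 0" "a + p0*p0 - pn*pn = -1" "pn - p0 = E"
  shows "p0 = (1/E - E)/2 + a/(2*E)" "pn = (1/E + E)/2 + a/(2*E)"
proof -
  have pn: "pn = p0 + E" using assms(3) by simp
  have a: "a = 2*p0*E + E*E - 1" using assms(2) unfolding pn by (simp add: algebra_simps)
  show "p0 = (1/E - E)/2 + a/(2*E)" using assms(1) unfolding a by (simp add: field_simps)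
  show "pn = (1/E + E)/2 + a/(2*E)" using assms(1) unfolding pn a by (simp add: field_simps)
qed

lemma iwa_vec:
  assumes "lf p p = -1" "p$Inr True - p$Inr False = exp (-T)"
  shows "p = uu (-(exp T) *\<^sub>R spt p) *v ((LA T :: 'k::finite lmat) *v en)"
proof -
  define E where "E = exp (-T)"
  have E: "E > 0" by (simp add: E_def)
  have eT: "exp T = 1/E" by (simp add: E_def exp_minus divide_inverse)
  have sT: "sinh T = (1/E - E)/2" by (simp add: sinh_def eT E_def)
  have cT: "cosh T = (1/E + E)/2" by (simp add: cosh_def eT E_def)
  define a where "a = spt p \<bullet> spt p"
  have h: "a + p$Inr False * p$Inr False - p$Inr True * p$Inr True = -1"
    using assms(1) by (simp add: lf_def a_def)
  note alg = iwa_alg[OF E h assms(2)[folded E_def]]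
  have yy: "(-(exp T) *\<^sub>R spt p) \<bullet> (-(exp T) *\<^sub>R spt p) = (1/E)*(1/E)*a"
    by (simp add: a_def eT)
  have d: "((LA T :: 'k lmat) *v en)$Inr False - ((LA T :: 'k lmat) *v en)$Inr True = - E"
    by (simp add: LA_mulv sT cT field_simps)
  show ?thesis
    unfolding vec_eq_split
  proof (intro conjI)
    show "spt p = spt (uu (-(exp T) *\<^sub>R spt p) *v ((LA T :: 'k lmat) *v en))"
      unfolding uu_mulv d using E by (simp add: LA_mulv eT)
    show "p $ Inr False = (uu (-(exp T) *\<^sub>R spt p) *v ((LA T :: 'k lmat) *v en)) $ Inr False"
      unfolding uu_mulv d yy using E by (simp add: LA_mulv sT alg(1) field_simps)
    show "p $ Inr True = (uu (-(exp T) *\<^sub>R spt p) *v ((LA T :: 'k lmat) *v en)) $ Inr True"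
      unfolding uu_mulv d yy using E by (simp add: LA_mulv cT alg(2) field_simps)
  qed
qed

lemma lf_en_en: "lf en en = -1" and lf_en_nu: "lf en nu = -1"
  by (simp_all add: lf_def)

lemma iwasawa:
  fixes q :: "'k::finite lmat"
  assumes "q \<in> LGw" "(q *v en)$Inr True - (q *v en)$Inr False = exp (-T)"
  shows "\<exists>y k. k \<in> LK \<and> q = uu y ** LA T ** k"
proof -
  define p where "p = q *v en"
  have "lf p p = -1" using assms(1) by (simp add: p_def LGw_pres lf_en_en)
  note pv = iwa_vec[OF this assms(2)[folded p_def]]
  define y where "y = -(exp T) *\<^sub>R spt p"
  have pv': "p = uu y *v ((LA T :: 'k lmat) *v en)" unfolding y_def by (rule pv)
  define k where "k = LA (-T) ** (uu (-y) ** q)"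
  have kG: "k \<in> LGw" unfolding k_def using assms(1) by (intro LGw_mult uu_LG LA_LG)
  have "k *v en = LA (-T) *v (uu (-y) *v p)"
    by (simp only: k_def p_def matrix_vector_mul_assoc matrix_mul_assoc)
  also have "\<dots> = en" apply (subst pv')
    by (simp add: cancel_v uu_inv LA_inv)
  finally have "k \<in> LK" using kG LK_crit by blast
  moreover have "q = uu y ** LA T ** k"
    unfolding k_def matrix_mul_assoc[symmetric] by (simp add: cancel_l uu_inv LA_inv)
  ultimately show ?thesis by blast
qed

lemma fixnu:
  fixes q :: "'k::finite lmat"
  assumes "q \<in> LGw" "q *v nu = nu"
  shows "\<exists>m\<in>LM. \<exists>y. q = m ** uu y"
proof -
  define qi where "qi = matrix_inv q"
  have qiG: "qi \<in> LGw" and qqi: "q ** qi = mat 1" and qiq: "qi ** q = mat 1"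
    using LGw_inv[OF assms(1)] by (auto simp: qi_def)
  have qinu: "qi *v nu = nu" by (metis assms(2) cancel_v qiq)
  define p where "p = qi *v en"
  have lpp: "lf p p = -1" using qiG by (simp add: p_def LGw_pres lf_en_en)
  have "lf p nu = -1" using qiG qinu by (metis LGw_pres lf_en_nu p_def)
  then have "p$Inr True - p$Inr False = exp (- 0)" by (simp add: lf_nu)
  from iwa_vec[OF lpp this]
  have pv0: "p = uu (- spt p) *v en" by (simp add: LA_zero)
  define z where "z = - spt p"
  have pv: "p = uu z *v en" unfolding z_def by (rule pv0)
  define m where "m = q ** uu z"
  have mG: "m \<in> LGw" unfolding m_def using assms(1) by (intro LGw_mult uu_LG)
  have men: "m *v en = en"
    unfolding m_def by (metis cancel_v matrix_vector_mul_assoc p_def pv qqi z_def)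
  have mnu: "m *v nu = nu" unfolding m_def
    by (simp add: matrix_vector_mul_assoc[symmetric] uu_nu assms(2))
  have "m *v e0 = e0"
    using men mnu by (simp add: nu_def matrix_vector_right_distrib)
  then have "m \<in> LM" using mG men fix_e0_en_LM by blast
  moreover have "q = m ** uu (-z)"
    unfolding m_def matrix_mul_assoc[symmetric] by (simp add: uu_mult uu_zero)
  ultimately show ?thesis by blast
qed

lemma LP_crit:
  fixes g :: "'k::finite lmat"
  assumes "g \<in> LGw" "g *v nu = c *\<^sub>R nu" "c > 0"
  shows "g \<in> LP"
proof -
  define r where "r = ln c"
  have er: "exp r = c" using assms(3) by (simp add: r_def)
  define q where "q = LA (-r) ** g"
  have qG: "q \<in> LGw" unfolding q_def using assms(1) by (intro LGw_mult LA_LG)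
  have "q *v nu = nu" unfolding q_def
    using assms(3) by (simp add: matrix_vector_mul_assoc[symmetric] assms(2) matrix_vector_mult_scaleR
        LA_nu er exp_minus)
  then obtain m y where m: "m \<in> LM" "q = m ** uu y" using fixnu[OF qG] by blast
  have "g = LA r ** q" unfolding q_def by (simp add: cancel_l LA_inv)
  also have "\<dots> = (LA r ** m) ** uu y" by (simp add: m matrix_mul_assoc)
  also have "LA r ** m = m ** LA r" using m(1) by (simp add: LM_def)
  finally show ?thesis using m(1) by (auto simp: LP_def)
qed



lemma sg_facts:
  fixes sg :: "'k::finite lmat"
  assumes "sg \<in> LK" "sg ** sg = mat 1" "\<And>t. sg ** LA t ** matrix_inv sg = LA (- t)"
  shows "sg *v en = en" "sg *v e0 = - e0" "\<And>t. sg ** LA t = LA (-t) ** sg"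
    "sg *v nu = en - e0" "sg \<in> LGw"
proof -
  show sen: "sg *v en = en" using assms(1) by (simp add: LK_def en_def)
  show "sg \<in> LGw" using assms(1) LK_LG LG_LGw by blast
  have si: "matrix_inv sg = sg" using assms(2) by (rule matrix_inv_eq)
  show sc: "sg ** LA t = LA (-t) ** sg" for t
  proof -
    have "sg ** LA t = (sg ** LA t ** sg) ** sg"
      by (simp add: matrix_mul_assoc[symmetric] assms(2))
    also have "\<dots> = LA (-t) ** sg" using assms(3)[of t] si by simp
    finally show ?thesis .
  qed
  have "sg *v (LA 1 *v en) = LA (-1) *v (sg *v en)"
    by (simp add: matrix_vector_mul_assoc sc)
  then have "sinh 1 *\<^sub>R (sg *v e0) + cosh 1 *\<^sub>R en = (- sinh 1) *\<^sub>R e0 + cosh 1 *\<^sub>R en"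
    by (simp add: LA_en mv_lin sen)
  then have "sinh (1::real) *\<^sub>R (sg *v e0) = sinh 1 *\<^sub>R (- e0)" by simp
  then show se0: "sg *v e0 = - e0" by (metis scaleR_cancel_left sinh_ne)
  show "sg *v nu = en - e0" by (simp add: nu_def matrix_vector_right_distrib se0 sen)
qed

lemma decomp_nu:
  fixes sg :: "'k::finite lmat"
  assumes "sg *v nu = en - e0" "m \<in> LM" "g = uu x ** sg ** m ** LA r ** uu y"
  shows "g *v nu = exp r *\<^sub>R (uu x *v (en - e0))"
  unfolding assms(3)
  by (simp only: matrix_vector_mul_assoc[symmetric] uu_nu LA_nu matrix_vector_mult_scaleR
      LM_facts[OF assms(2)] assms(1))

lemma decomp_unique:
  fixes x x' :: "real^'k::finite"
  assumes "w = exp r *\<^sub>R (uu x *v (en - e0))" "w = exp r' *\<^sub>R (uu x' *v (en - e0))"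
  shows "r = r' \<and> x = x'"
proof -
  have two: "(uu z *v (en - e0))$Inr True - (uu z *v (en - e0))$Inr False = 2" for z :: "real^'k"
    by (simp only: uu_nub)
  have "w$Inr True - w$Inr False = exp r * ((uu x *v (en - e0))$Inr True - (uu x *v (en - e0))$Inr False)"
    unfolding assms(1) by (simp only: vector_scaleR_component real_scaleR_def right_diff_distrib)
  also have "\<dots> = 2 * exp r" by (simp only: two)
  finally have "w$Inr True - w$Inr False = 2 * exp r" .
  moreover have "w$Inr True - w$Inr False = exp r' * ((uu x' *v (en - e0))$Inr True - (uu x' *v (en - e0))$Inr False)"
    unfolding assms(2) by (simp only: vector_scaleR_component real_scaleR_def right_diff_distrib)
  then have "w$Inr True - w$Inr False = 2 * exp r'" by (simp only: two)
  ultimately have r: "r = r'" by simp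
  have "spt w = (-2 * exp r) *\<^sub>R x" using assms(1) by (simp add: uu_nub)
  moreover have "spt w = (-2 * exp r) *\<^sub>R x'" using assms(2) r by (simp add: uu_nub)
  ultimately have "x = x'" by simp
  with r show ?thesis by simp
qed

lemma bdry_height:
  fixes sg :: "'k::finite lmat"
  assumes "sg *v nu = en - e0" "m \<in> LM" "g = uu x ** sg ** m ** LA r ** uu y"
  shows "bdry sg g = x" "height sg g = exp r"
proof -
  have u: "r' = r \<and> x' = x" if "m' \<in> LM" "g = uu x' ** sg ** m' ** LA r' ** uu y'" for x' m' r' y'
    using decomp_unique[OF decomp_nu[OF assms(1) that] decomp_nu[OF assms]] .
  show "bdry sg g = x" unfolding bdry_def
    by (rule the_equality) (use assms u in blast)+
  have "(THE r. \<exists>x. \<exists>m\<in>LM. \<exists>y. g = uu x ** sg ** m ** LA r ** uu y) = r"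
    by (rule the_equality) (use assms u in blast)+
  then show "height sg g = exp r" by (simp add: height_def)
qed

lemma hv_inner: "(v - v$Inr True *\<^sub>R en) \<bullet> (u - u$Inr True *\<^sub>R en)
   = spt v \<bullet> spt u + v$Inr False * u$Inr False"
  by (simp add: inner_split)

lemma bruhat:
  fixes sg g :: "'k::finite lmat"
  assumes sgnu: "sg *v nu = en - e0" and sgG: "sg \<in> LGw"
    and gG: "g \<in> LG" and gP: "g \<notin> LP"
  shows "\<exists>x m r y. m \<in> LM \<and> g = uu x ** sg ** m ** LA r ** uu y"
proof -
  have gw: "g \<in> LGw" using gG LG_LGw by blast
  define w where "w = g *v nu"
  define q where "q = g *v en"
  have qn: "q$Inr True > 0" using gG by (simp add: q_def en_def column_entry LG_def)
  have "lf w w = lf (nu :: real^('k+bool)) nu" using gw by (simp only: w_def LGw_pres)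
  then have lww: "lf w w = 0" by (simp add: lf_def)
  have "lf q q = lf (en :: real^('k+bool)) en" using gw by (simp only: q_def LGw_pres)
  then have lqq: "lf q q = -1" by (simp add: lf_def)
  have "lf w q = lf (nu :: real^('k+bool)) en" using gw by (simp only: q_def w_def LGw_pres)
  then have lwq: "lf w q = -1" by (simp add: lf_def)
  define S where "S = spt w \<bullet> spt w"
  have S0: "S \<ge> 0" by (simp add: S_def)
  have A: "S + w$Inr False * w$Inr False = w$Inr True * w$Inr True" using lww by (simp add: lf_def S_def)
  have B: "spt q \<bullet> spt q + q$Inr False * q$Inr False = q$Inr True * q$Inr True - 1"
    using lqq by (simp add: lf_def)
  define C where "C = spt w \<bullet> spt q + w$Inr False * q$Inr False"
  have Ce: "C = w$Inr True * q$Inr True - 1" using lwq by (simp add: lf_def C_def)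
  have CS: "\<bar>C\<bar> \<le> sqrt (w$Inr True * w$Inr True) * sqrt (q$Inr True * q$Inr True - 1)"
    using Cauchy_Schwarz_ineq2[of "w - w$Inr True *\<^sub>R en" "q - q$Inr True *\<^sub>R en"]
    unfolding norm_eq_sqrt_inner hv_inner C_def[symmetric] using A B by (simp add: S_def)
  have s1: "sqrt (w$Inr True * w$Inr True) = \<bar>w$Inr True\<bar>" by (simp add: real_sqrt_abs2)
  have s2: "sqrt (q$Inr True * q$Inr True - 1) \<le> q$Inr True"
  proof -
    have "sqrt (q$Inr True * q$Inr True - 1) \<le> sqrt (q$Inr True * q$Inr True)"
      by (rule real_sqrt_le_mono) simp
    then show ?thesis using qn by simp
  qed
  have wn: "w$Inr True > 0"
  proof (rule ccontr)
    assume "\<not> ?thesis"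
    then have "\<bar>w$Inr True\<bar> = - w$Inr True" by simp
    moreover have "\<bar>w$Inr True\<bar> * sqrt (q$Inr True * q$Inr True - 1) \<le> \<bar>w$Inr True\<bar> * q$Inr True"
      using s2 by (simp add: mult_left_mono)
    ultimately have "\<bar>C\<bar> \<le> - w$Inr True * q$Inr True" using CS s1 by simp
    then show False using Ce by simp
  qed
  have "w$Inr False * w$Inr False \<le> w$Inr True * w$Inr True" using A S0 by simp
  then have "\<bar>w$Inr False\<bar> \<le> w$Inr True" using wn
    by (metis abs_le_square_iff abs_of_pos power2_eq_square)
  then have d0: "w$Inr True - w$Inr False \<ge> 0" by simp
  define d where "d = w$Inr True - w$Inr False"
  have Sd: "S = d * (w$Inr True + w$Inr False)" using A by (simp add: d_def algebra_simps)
  have dpos: "d > 0"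
  proof (rule ccontr)
    assume "\<not> ?thesis"
    then have dz: "d = 0" using d0 d_def by simp
    then have "S = 0" using Sd by simp
    then have "spt w = 0" by (simp add: S_def)
    moreover have "w$Inr False = w$Inr True" using dz d_def by simp
    ultimately have "w = w$Inr True *\<^sub>R nu" unfolding vec_eq_split by simp
    then have "g \<in> LP" using LP_crit[OF gw _ wn] w_def by blast
    with gP show False by simp
  qed
  define x1 where "x1 = - (1/d) *\<^sub>R spt w"
  define r where "r = ln (d/2)"
  have er: "exp r = d/2" using dpos by (simp add: r_def)
  define h where "h = uu x1 ** sg ** LA r"
  have hG: "h \<in> LGw" unfolding h_def using sgG by (intro LGw_mult uu_LG LA_LG)
  have xx: "x1 \<bullet> x1 = S / (d*d)" by (simp add: x1_def S_def)
  have "h *v nu = (d/2) *\<^sub>R (uu x1 *v (en - e0))"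
    unfolding h_def by (simp only: matrix_vector_mul_assoc[symmetric] LA_nu matrix_vector_mult_scaleR sgnu er)
  also have "\<dots> = w"
  proof -
    have xx': "x1 \<bullet> x1 = (w$Inr True + w$Inr False) / d" using dpos unfolding xx Sd by simp
    have c1: "spt ((d/2) *\<^sub>R (uu x1 *v (en - e0))) = spt w"
      using dpos by (simp add: uu_nub x1_def)
    have c2: "((d/2) *\<^sub>R (uu x1 *v (en - e0)))$Inr False = w$Inr False"
      using dpos unfolding vector_scaleR_component uu_nub xx' by (simp add: field_simps d_def)
    have c3: "((d/2) *\<^sub>R (uu x1 *v (en - e0)))$Inr True = w$Inr True"
      using dpos unfolding vector_scaleR_component uu_nub xx' by (simp add: field_simps d_def)
    show ?thesis unfolding vec_eq_split using c1 c2 c3 by blast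
  qed
  finally have hnu: "h *v nu = w" .
  define q' where "q' = matrix_inv h ** g"
  have q'G: "q' \<in> LGw" unfolding q'_def using hG gw by (intro LGw_mult LGw_inv)
  have "q' *v nu = nu" unfolding q'_def
    by (metis LGw_inv(2) hG hnu cancel_v matrix_vector_mul_assoc w_def)
  then obtain m y where m: "m \<in> LM" "q' = m ** uu y" using fixnu[OF q'G] by blast
  have "g = h ** q'" unfolding q'_def by (simp add: cancel_l LGw_inv hG)
  also have "\<dots> = ((uu x1 ** sg) ** (LA r ** m)) ** uu y" by (simp add: h_def m(2) matrix_mul_assoc)
  also have "LA r ** m = m ** LA r" using m(1) by (simp add: LM_def)
  finally have "g = uu x1 ** sg ** m ** LA r ** uu y" by (simp add: matrix_mul_assoc)
  with m(1) show ?thesis by blast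
qed



lemma future:
  fixes a :: "'k::finite lmat"
  assumes aG: "a \<in> LG" and qq: "lf q q = -1" and qn: "q$Inr True > 0"
  shows "(a *v q)$Inr True > 0"
proof -
  have aw: "a \<in> LGw" using aG LG_LGw by blast
  define r where "r = matrix_inv a *v en"
  have ar: "a *v r = en" unfolding r_def by (simp add: matrix_vector_mul_assoc LGw_inv aw)
  have "lf r en = lf (a *v r) (a *v en)" using aw by (simp only: LGw_pres)
  then have "- r$Inr True = lf en (a *v en)" by (simp add: ar lf_en)
  also have "\<dots> = - (a *v en)$Inr True" by (subst lf_sym) (simp add: lf_en)
  finally have rn: "r$Inr True = a $ Inr True $ Inr True" by (simp add: en_def column_entry)
  then have rpos: "r$Inr True > 0" using aG by (simp add: LG_def)
  have "lf r r = lf (a *v r) (a *v r)" using aw by (simp only: LGw_pres)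
  then have rr: "lf r r = -1" by (simp add: ar lf_def)
  have "lf (a *v q) en = lf (a *v q) (a *v r)" by (simp add: ar)
  also have "\<dots> = lf q r" using aw by (simp only: LGw_pres)
  finally have aq: "(a *v q)$Inr True = - lf q r" by (simp add: lf_en)
  define C where "C = spt q \<bullet> spt r + q$Inr False * r$Inr False"
  have B1: "spt q \<bullet> spt q + q$Inr False * q$Inr False = q$Inr True * q$Inr True - 1"
    using qq by (simp add: lf_def)
  have B2: "spt r \<bullet> spt r + r$Inr False * r$Inr False = r$Inr True * r$Inr True - 1"
    using rr by (simp add: lf_def)
  have CS: "\<bar>C\<bar> \<le> sqrt (q$Inr True * q$Inr True - 1) * sqrt (r$Inr True * r$Inr True - 1)"
    using Cauchy_Schwarz_ineq2[of "q - q$Inr True *\<^sub>R en" "r - r$Inr True *\<^sub>R en"]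
    unfolding norm_eq_sqrt_inner hv_inner C_def[symmetric] using B1 B2 by simp
  have sl: "sqrt (z * z - 1) < z" if "z > 0" for z :: real
  proof -
    have "sqrt (z * z - 1) < sqrt (z * z)" by (rule real_sqrt_less_mono) simp
    then show ?thesis using that by simp
  qed
  have "sqrt (q$Inr True * q$Inr True - 1) * sqrt (r$Inr True * r$Inr True - 1) < q$Inr True * r$Inr True"
  proof -
    have "0 \<le> spt q \<bullet> spt q + q$Inr False * q$Inr False" by (intro add_nonneg_nonneg) auto
    then have n1: "0 \<le> sqrt (q$Inr True * q$Inr True - 1)" using B1 by simp
    have "0 \<le> spt r \<bullet> spt r + r$Inr False * r$Inr False" by (intro add_nonneg_nonneg) auto
    then have n2: "0 \<le> sqrt (r$Inr True * r$Inr True - 1)" using B2 by simp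
    show ?thesis using sl[OF qn] sl[OF rpos] n1 n2 qn by (intro mult_strict_mono) auto
  qed
  moreover have "lf q r = C - q$Inr True * r$Inr True" by (simp add: lf_def C_def)
  ultimately show ?thesis using aq CS by simp
qed

lemma LG_mult:
  fixes a b :: "'k::finite lmat"
  assumes "a \<in> LG" "b \<in> LG"
  shows "a ** b \<in> LG"
proof -
  have w: "a ** b \<in> LGw" using assms LG_LGw LGw_mult by blast
  have bw: "b \<in> LGw" using assms LG_LGw by blast
  define q where "q = b *v en"
  have "lf q q = lf (en :: real^('k+bool)) en" using bw by (simp only: q_def LGw_pres)
  then have qq: "lf q q = -1" by (simp add: lf_def)
  have qn: "q$Inr True > 0" using assms(2) by (simp add: q_def en_def column_entry LG_def)
  have "(a ** b) $ Inr True $ Inr True = (a *v q) $ Inr True"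
    by (simp add: q_def en_def column_entry[symmetric] matrix_vector_mul_assoc)
  then have "(a ** b) $ Inr True $ Inr True > 0" using future[OF assms(1) qq qn] by simp
  with w show ?thesis by (simp add: LG_def LGw_def)
qed

lemma LK_mult:
  assumes "a \<in> LK" "b \<in> LK" shows "a ** b \<in> LK"
proof (rule LK_crit)
  show "a ** b \<in> LGw" using assms LK_LG LG_LGw LGw_mult by blast
  show "(a ** b) *v en = en" using assms
    by (simp add: LK_def en_def[symmetric] matrix_vector_mul_assoc[symmetric])
qed

lemma mat1_LK: "mat 1 \<in> LK"
  by (rule LK_crit) (simp_all add: LGw_def)

lemma enters_lemma:
  fixes sg g :: "'k::finite lmat"
  assumes sgnu: "sg *v nu = en - e0" and sen: "sg *v en = en"
    and sc: "\<And>t. sg ** LA t = LA (-t) ** sg" and sgG: "sg \<in> LGw"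
    and gw: "g \<in> LGw" and m: "m \<in> LM" and gd: "g = uu x1 ** sg ** m ** LA r ** uu y"
    and lam: "lam > 0" "lam \<le> 1"
    and Q: "exp r * (lam + (norm (x - x1))^2 / lam) \<le> exp (- s')"
  shows "enters sg x g s'"
proof -
  define t where "t = - ln lam"
  have t0: "t \<ge> 0" using lam by (simp add: t_def)
  have et: "exp (-t) = lam" "exp t = 1/lam" using lam by (simp_all add: t_def exp_minus divide_inverse)
  define z where "z = x - x1"
  define W where "W = matrix_inv g ** (uu x ** sg ** LA t)"
  have WG: "W \<in> LGw" unfolding W_def using gw sgG by (intro LGw_mult LGw_inv uu_LG LA_LG)
  have gW: "g ** W = uu x ** sg ** LA t" unfolding W_def by (simp add: cancel_l LGw_inv gw)
  define p where "p = W *v en"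
  have gnu: "g *v nu = exp r *\<^sub>R (uu x1 *v (en - e0))" by (rule decomp_nu[OF sgnu m gd])
  have P: "g *v p = uu x1 *v (uu z *v (LA (-t) *v en))"
  proof -
    have "g *v p = uu x *v (sg *v (LA t *v en))" by (simp add: p_def matrix_vector_mul_assoc gW matrix_mul_assoc)
    also have "sg *v (LA t *v en) = LA (-t) *v en"
      by (simp add: matrix_vector_mul_assoc sc) (simp add: matrix_vector_mul_assoc[symmetric] sen)
    also have "uu x = uu x1 ** uu z" by (simp add: uu_mult z_def)
    finally show ?thesis by (simp add: matrix_vector_mul_assoc matrix_mul_assoc)
  qed
  have "lf p nu = lf (g *v p) (g *v nu)" using gw by (simp only: LGw_pres)
  also have "\<dots> = exp r * lf (uu z *v (LA (-t) *v en)) (en - e0)"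
    unfolding P gnu lf_scale_right uu_pres ..
  also have "lf (uu z *v (LA (-t) *v en)) (en - e0) = - (exp (-t) + (z \<bullet> z) * exp t)"
  proof -
    have e1: "sinh (-t) - cosh (-t) = - exp t" using sinh_minus_cosh[of "-t"] by simp
    have e2: "cosh t - sinh t = exp (-t)" using sinh_minus_cosh[of t] by simp
    show ?thesis unfolding lf_diff_right lf_en lf_e0
      by (simp add: uu_mulv LA_mulv e1 algebra_simps) (simp add: cosh_plus_sinh[symmetric] algebra_simps)
  qed
  finally have "lf p nu = - (exp r * (lam + (norm z)^2 / lam))"
    using lam by (simp add: et power2_norm_eq_inner field_simps)
  then have pd: "p$Inr True - p$Inr False = exp r * (lam + (norm z)^2 / lam)" by (simp add: lf_nu)
  define Qv where "Qv = exp r * (lam + (norm z)^2 / lam)"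
  have Qpos: "Qv > 0" unfolding Qv_def using lam by (intro mult_pos_pos add_pos_nonneg) auto
  define T where "T = - ln Qv"
  have eT: "exp (-T) = Qv" using Qpos by (simp add: T_def)
  have "(W *v en)$Inr True - (W *v en)$Inr False = exp (-T)"
    unfolding eT Qv_def using pd by (simp add: p_def)
  from iwasawa[OF WG this] obtain y' k where k: "k \<in> LK" "W = uu y' ** LA T ** k" by blast
  have "Qv \<le> exp (- s')" using Q by (simp add: Qv_def z_def)
  then have "ln Qv \<le> - s'" using Qpos by (metis ln_exp ln_le_cancel_iff exp_gt_zero)
  then have Ts: "T \<ge> s'" by (simp add: T_def)
  have "uu x ** sg ** LA t = g ** (uu y' ** LA T ** k)" using gW k(2) by simp
  moreover have "uu y' ** LA T ** k \<in> Omega LN s'" unfolding Omega_def LN_def using k(1) Ts by blast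
  ultimately have "uu x ** sg ** LA t \<in> lmul g (Omega LN s')" by (auto simp: lmul_def)
  then show ?thesis using t0 by (auto simp: enters_def)
qed



lemma matrix_add_rdistrib': "((A + B) ** C) = (A ** C) + (B ** C)"
  for A B :: "real^'n^'m" and C :: "real^'p^'n"
  by (vector matrix_matrix_mult_def sum.distrib distrib_right)

lemma conj_linear: "linear (\<lambda>c::real^'n^'n. A ** c ** B)"
  by (rule linearI) (simp_all add: matrix_add_ldistrib matrix_add_rdistrib' matrix_scalar_ac scalar_matrix_assoc)

lemma compact_conj: "compact C \<Longrightarrow> compact ((\<lambda>c::real^'n^'n. A ** c ** B) ` C)"
  by (intro compact_continuous_image linear_continuous_on) (simp add: linear_conv_bounded_linear[symmetric] conj_linear)

lemma lam_ineq:
  fixes Bv D nz :: real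
  assumes "Bv > 0" "D \<ge> 2" "Bv \<le> D" "0 \<le> nz" "nz \<le> Bv/(2*D)"
  shows "Bv/D > 0" "Bv/D \<le> 1" "Bv/D + nz^2/(Bv/D) \<le> Bv"
proof -
  show "Bv/D > 0" using assms by simp
  show "Bv/D \<le> 1" using assms by simp
  have "nz^2 \<le> (Bv/(2*D))^2" using assms by (intro power_mono) auto
  then have "nz^2 * D / Bv \<le> (Bv/(2*D))^2 * D / Bv" using assms
    by (intro divide_right_mono mult_right_mono) auto
  also have "\<dots> = Bv / (4*D)" using assms by (simp add: field_simps power2_eq_square)
  finally have "nz^2/(Bv/D) \<le> Bv/(4*D)" by (simp add: field_simps)
  moreover have "Bv/D + Bv/(4*D) \<le> Bv" using assms by (simp add: field_simps)
  ultimately show "Bv/D + nz^2/(Bv/D) \<le> Bv" by simp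
qed

lemma LN_nu: "v \<in> LN \<Longrightarrow> v *v nu = nu"
  by (auto simp: LN_def uu_nu)

lemma lmul_one: "lmul (mat 1) S = S"
  by (simp add: lmul_def)



theorem proposition3p3:
  fixes Gamma Xi eta0 :: "'k::finite lmat set"
    and s0 s1 :: real and sg :: "'k lmat"
  assumes sg: "sg \<in> LK" "sg ** sg = mat 1"
      "\<And>t. sg ** LA t ** matrix_inv sg = LA (- t)"
    and Gamma_sub: "Gamma \<subseteq> LG"
    and Gamma_one: "mat 1 \<in> Gamma"
    and Gamma_mult: "\<And>g h. g \<in> Gamma \<Longrightarrow> h \<in> Gamma \<Longrightarrow> g ** h \<in> Gamma"
    and Gamma_inv: "\<And>g. g \<in> Gamma \<Longrightarrow> matrix_inv g \<in> Gamma"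
    and Gamma_discrete: "\<exists>e>0. \<forall>g\<in>Gamma. g \<noteq> mat 1 \<longrightarrow> e \<le> norm (g - mat 1)"
    and Gamma_noncocompact: "\<not> (\<exists>C. compact C \<and> LG \<subseteq> {g ** c | g c. g \<in> Gamma \<and> c \<in> C})"
    and s0: "s0 > 0"
    and eta0: "compact eta0" "eta0 \<subseteq> LN"
    and Xi: "finite Xi" "mat 1 \<in> Xi" "Xi \<subseteq> LG"
    and cond_i: "LG = {g ** xi ** w | g xi w. g \<in> Gamma \<and> xi \<in> Xi \<and> w \<in> Omega eta0 s0}"
    and cond_ii: "\<And>xi. xi \<in> Xi \<Longrightarrow> \<exists>C. compact C
        \<and> C \<subseteq> {xi ** v ** matrix_inv xi | v. v \<in> LN}
        \<and> {xi ** v ** matrix_inv xi | v. v \<in> LN}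
            \<subseteq> {g ** c | g c. g \<in> Gamma \<inter> {xi ** v ** matrix_inv xi | v. v \<in> LN} \<and> c \<in> C}"
    and cond_iii: "\<And>eta. compact eta \<Longrightarrow> eta \<subseteq> LN \<Longrightarrow>
        finite {g \<in> Gamma. \<exists>xi\<in>Xi. lmul (g ** xi) (Omega eta s0) \<inter> Omega eta s0 \<noteq> {}}"
    and cond_iv: "\<And>eta. compact eta \<Longrightarrow> eta0 \<subseteq> eta \<Longrightarrow> eta \<subseteq> LN \<Longrightarrow>
        \<exists>s>s0. \<forall>g\<in>Gamma. \<forall>xi1\<in>Xi. \<forall>xi2\<in>Xi.
          lmul (g ** xi1) (Omega eta s0) \<inter> lmul xi2 (Omega eta s) \<noteq> {} \<longrightarrow>
          xi1 = xi2 \<and> g \<in> {xi1 ** v ** m ** matrix_inv xi1 | v m. v \<in> LN \<and> m \<in> LM}"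
    and s1: "s1 > s0"
    and s1_iv: "\<forall>g\<in>Gamma. \<forall>xi1\<in>Xi. \<forall>xi2\<in>Xi.
          lmul (g ** xi1) (Omega eta0 s0) \<inter> lmul xi2 (Omega eta0 s1) \<noteq> {} \<longrightarrow>
          xi1 = xi2 \<and> g \<in> {xi1 ** v ** m ** matrix_inv xi1 | v m. v \<in> LN \<and> m \<in> LM}"
  shows "\<exists>c>0. \<exists>c'>0. \<forall>x g xi. g \<in> Gamma \<longrightarrow> xi \<in> Xi \<longrightarrow> g ** xi \<notin> LP \<longrightarrow>
      (norm (x - bdry sg (g ** xi)) \<le> c / height sg (g ** xi)
         \<longrightarrow> enters sg x (g ** xi) s0)
    \<and> (norm (x - bdry sg (g ** xi)) \<le> c' / height sg (g ** xi)
         \<longrightarrow> enters sg x (g ** xi) s1)"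
proof -
  note sgf = sg_facts[OF sg]
  have sen: "sg *v en = en" and sc: "\<And>t. sg ** LA t = LA (-t) ** sg"
    and sgnu: "sg *v nu = en - e0" and sgG: "sg \<in> LGw" using sgf by auto
  have GL: "g \<in> LG" if "g \<in> Gamma" for g using that Gamma_sub by blast
  have XL: "xi \<in> LG" if "xi \<in> Xi" for xi using that Xi(3) by blast
  have GW: "g \<in> LGw" if "g \<in> LG" for g :: "'k lmat" using that LG_LGw by blast
  have mi1: "matrix_inv (mat 1 :: 'k lmat) = mat 1" by (rule matrix_inv_eq) simp
  from cond_ii have "\<forall>xi\<in>Xi. \<exists>C. compact C
        \<and> C \<subseteq> {xi ** v ** matrix_inv xi | v. v \<in> LN}
        \<and> {xi ** v ** matrix_inv xi | v. v \<in> LN}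
            \<subseteq> {g ** c | g c. g \<in> Gamma \<inter> {xi ** v ** matrix_inv xi | v. v \<in> LN} \<and> c \<in> C}"
    by blast
  then obtain Cf where Cf: "\<forall>xi\<in>Xi. compact (Cf xi)
        \<and> Cf xi \<subseteq> {xi ** v ** matrix_inv xi | v. v \<in> LN}
        \<and> {xi ** v ** matrix_inv xi | v. v \<in> LN}
            \<subseteq> {g ** c | g c. g \<in> Gamma \<inter> {xi ** v ** matrix_inv xi | v. v \<in> LN} \<and> c \<in> Cf xi}"
    by (rule bchoice[elim_format]) blast
  define V where "V xi = (\<lambda>c. matrix_inv xi ** c ** xi) ` Cf xi" for xi
  define eta where "eta = eta0 \<union> {mat 1} \<union> (\<Union>xi\<in>Xi. V xi)"
  have Vc: "compact (V xi)" if "xi \<in> Xi" for xi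
    unfolding V_def using Cf that by (intro compact_conj) blast
  have etac: "compact eta" unfolding eta_def using eta0(1) Vc Xi(1) by (intro compact_Un compact_UN) auto
  have VLN: "V xi \<subseteq> LN" if "xi \<in> Xi" for xi
  proof
    fix w assume "w \<in> V xi"
    then obtain c where c: "c \<in> Cf xi" "w = matrix_inv xi ** c ** xi" unfolding V_def by (rule imageE)
    have "Cf xi \<subseteq> {xi ** v ** matrix_inv xi | v. v \<in> LN}" using Cf that by blast
    then obtain v where v: "v \<in> LN" "c = xi ** v ** matrix_inv xi" using c(1) by blast
    have xw: "xi \<in> LGw" using XL[OF that] GW by blast
    have "w = v" unfolding c(2) v(2) matrix_mul_assoc[symmetric]
      by (simp add: cancel_l LGw_inv xw)
    then show "w \<in> LN" using v by simp
  qed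
  have etaLN: "eta \<subseteq> LN" unfolding eta_def using eta0(2) VLN
    by (auto simp: LN_def uu_zero[symmetric])
  have eta0eta: "eta0 \<subseteq> eta" by (auto simp: eta_def)
  obtain s where s: "s > s0" and P: "\<forall>g\<in>Gamma. \<forall>xi1\<in>Xi. \<forall>xi2\<in>Xi.
          lmul (g ** xi1) (Omega eta s0) \<inter> lmul xi2 (Omega eta s) \<noteq> {} \<longrightarrow>
          xi1 = xi2 \<and> g \<in> {xi1 ** v ** m ** matrix_inv xi1 | v m. v \<in> LN \<and> m \<in> LM}"
    using cond_iv[OF etac eta0eta etaLN] by blast
  define S where "S = s + s0"
  define D where "D = max 2 (exp S)"
  have D2: "D \<ge> 2" and DS: "exp S \<le> D" by (auto simp: D_def)
  define c where "c = exp (-s0) / (2*D)"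
  define c' where "c' = exp (-s1) / (2*D)"
  have cpos: "c > 0" "c' > 0" using D2 by (auto simp: c_def c'_def)
  have main: "(norm (x - bdry sg (g ** xi)) \<le> c / height sg (g ** xi)
         \<longrightarrow> enters sg x (g ** xi) s0)
    \<and> (norm (x - bdry sg (g ** xi)) \<le> c' / height sg (g ** xi)
         \<longrightarrow> enters sg x (g ** xi) s1)"
    if gG: "g \<in> Gamma" and xiX: "xi \<in> Xi" and gP: "g ** xi \<notin> LP" for x g xi
  proof -
    have gxL: "g ** xi \<in> LG" using GL[OF gG] XL[OF xiX] by (rule LG_mult)
    obtain x1 m r y where m: "m \<in> LM" and gd: "g ** xi = uu x1 ** sg ** m ** LA r ** uu y"
      using bruhat[OF sgnu sgG gxL gP] by blast
    note bh = bdry_height[OF sgnu m gd]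
    have rlow: "r > - S"
    proof (rule ccontr)
      assume "\<not> r > - S"
      then have rS: "r \<le> - S" by simp
      have xw: "xi \<in> LGw" using XL[OF xiX] GW by blast
      have "xi ** uu (-y) ** matrix_inv xi \<in> {xi ** v ** matrix_inv xi | v. v \<in> LN}"
        by (auto simp: LN_def)
      then obtain dl c0 where dl: "dl \<in> Gamma" "dl \<in> {xi ** v ** matrix_inv xi | v. v \<in> LN}"
        and c0: "c0 \<in> Cf xi" and dc: "xi ** uu (-y) ** matrix_inv xi = dl ** c0"
        using Cf xiX by blast
      define v where "v = matrix_inv xi ** c0 ** xi"
      have veta: "v \<in> eta" using c0 xiX by (auto simp: eta_def V_def v_def)
      have dxv: "dl ** xi ** v = xi ** uu (-y)"
      proof -
        have "dl ** xi ** v = (dl ** c0) ** xi" unfolding v_def matrix_mul_assoc[symmetric]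
          by (simp add: cancel_l LGw_inv xw)
        also have "\<dots> = xi ** uu (-y)" unfolding dc[symmetric] matrix_mul_assoc[symmetric]
          by (simp add: LGw_inv xw)
        finally show ?thesis .
      qed
      define Z where "Z = g ** xi ** uu (-y) ** LA s0"
      have Z1: "Z = (g ** dl) ** xi ** (v ** LA s0 ** mat 1)"
      proof -
        have "Z = (g ** (xi ** uu (-y))) ** LA s0" unfolding Z_def by (simp add: matrix_mul_assoc)
        also have "\<dots> = (g ** (dl ** xi ** v)) ** LA s0" by (simp only: dxv)
        also have "\<dots> = (g ** dl) ** xi ** (v ** LA s0 ** mat 1)" by (simp add: matrix_mul_assoc)
        finally show ?thesis .
      qed
      define T where "T = - (r + s0)"
      have Ts: "T \<ge> s" using rS by (simp add: T_def S_def)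
      have Z2: "Z = uu x1 ** LA T ** (sg ** m)"
      proof -
        have "Z = uu x1 ** sg ** m ** (LA r ** ((uu y ** uu (-y)) ** LA s0))"
          unfolding Z_def gd by (simp add: matrix_mul_assoc)
        also have "\<dots> = uu x1 ** sg ** (m ** LA (r + s0))" by (simp add: uu_inv LA_mult matrix_mul_assoc)
        also have "m ** LA (r + s0) = LA (r + s0) ** m" using m by (simp add: LM_def)
        also have "uu x1 ** sg ** (LA (r + s0) ** m) = uu x1 ** (sg ** LA (r + s0)) ** m"
          by (simp add: matrix_mul_assoc)
        also have "\<dots> = uu x1 ** LA T ** (sg ** m)" by (simp add: sc T_def matrix_mul_assoc)
        finally show ?thesis .
      qed
      have "uu x1 \<in> {mat 1 ** v ** matrix_inv (mat 1) | v. v \<in> LN}"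
        by (auto simp: LN_def mi1)
      then obtain d0 c1 where d0: "d0 \<in> Gamma" "d0 \<in> {mat 1 ** v ** matrix_inv (mat 1) | v. v \<in> LN}"
        and c1: "c1 \<in> Cf (mat 1)" and dc1: "uu x1 = d0 ** c1"
        using Cf Xi(2) by blast
      have d0N: "d0 \<in> LN" using d0(2) by (auto simp: mi1)
      have c1eta: "c1 \<in> eta" using c1 Xi(2) by (force simp: eta_def V_def mi1)
      have d0w: "d0 \<in> LGw" using GL[OF d0(1)] GW by blast
      have sgm: "sg ** m \<in> LK" using sg(1) m LM_LK by (intro LK_mult) auto
      define g2 where "g2 = matrix_inv d0 ** g ** dl"
      have g2G: "g2 \<in> Gamma" unfolding g2_def using d0(1) gG dl(1)
        by (intro Gamma_mult Gamma_inv)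
      have "matrix_inv d0 ** Z = c1 ** LA T ** (sg ** m)"
        unfolding Z2 dc1 matrix_mul_assoc[symmetric] by (simp add: cancel_l LGw_inv d0w)
      then have in2: "matrix_inv d0 ** Z \<in> lmul (mat 1) (Omega eta s)"
        unfolding lmul_one Omega_def using c1eta Ts sgm by blast
      have "matrix_inv d0 ** Z = (g2 ** xi) ** (v ** LA s0 ** mat 1)"
        unfolding Z1 g2_def by (simp add: matrix_mul_assoc)
      then have in1: "matrix_inv d0 ** Z \<in> lmul (g2 ** xi) (Omega eta s0)"
        unfolding lmul_def Omega_def using veta mat1_LK by blast
      from P g2G xiX Xi(2) in1 in2
      have xi1: "xi = mat 1" and "g2 \<in> {xi ** v ** m ** matrix_inv xi | v m. v \<in> LN \<and> m \<in> LM}"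
        by blast+
      then obtain v' m' where v'm': "v' \<in> LN" "m' \<in> LM" "g2 = v' ** m'" by (auto simp: mi1)
      have dlN: "dl \<in> LN" using dl(2) xi1 by (auto simp: mi1)
      have "g ** dl = d0 ** g2" unfolding g2_def matrix_mul_assoc[symmetric]
        by (simp add: cancel_l LGw_inv d0w)
      then have "(g ** dl) *v nu = nu"
        by (simp add: v'm'(3) matrix_vector_mul_assoc[symmetric] LM_facts[OF v'm'(2)] LN_nu v'm'(1) d0N)
      then have "(g ** xi) *v nu = 1 *\<^sub>R nu"
        by (simp add: xi1 matrix_vector_mul_assoc[symmetric] LN_nu dlN)
      then have "g ** xi \<in> LP" using LP_crit GW[OF gxL] by (metis zero_less_one)
      with gP show False by simp
    qed
    have ent: "enters sg x (g ** xi) s'"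
      if s'0: "s' > 0" and nx: "norm (x - x1) \<le> (exp (-s') / (2*D)) / exp r" for s'
    proof -
      define Bv where "Bv = exp (-s') / exp r"
      have Bpos: "Bv > 0" by (simp add: Bv_def)
      have "Bv = exp (-s' - r)" by (simp add: Bv_def exp_diff)
      also have "\<dots> \<le> exp S" using s'0 rlow by simp
      finally have BD: "Bv \<le> D" using DS by simp
      have nx': "norm (x - x1) \<le> Bv / (2*D)" using nx by (simp add: Bv_def field_simps)
      note li = lam_ineq[OF Bpos D2 BD norm_ge_zero nx']
      have "exp r * (Bv/D + (norm (x - x1))^2/(Bv/D)) \<le> exp r * Bv"
        using li(3) by (intro mult_left_mono) auto
      also have "\<dots> = exp (-s')" by (simp add: Bv_def)
      finally show ?thesis
        using enters_lemma[OF sgnu sen sc sgG GW[OF gxL] m gd li(1) li(2)] by blast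
    qed
    show ?thesis unfolding bh using ent[of s0] ent[of s1] s0 s1
      by (simp add: c_def c'_def)
  qed
  show ?thesis using cpos main by blast
qed


end
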